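(* Let $\mathbf{A}\in\mathbb{R}^{d\times n}_{\ge0}$, $\epsilon\in[0,\frac12]$, $p\ge2$. Consider the iterates $w_t$ of the algorithm PNormPacking described in the context, and define $\Phi_t = \|\mathbf{A}w_t\|_p - \|w_t\|_1$. Then in every iteration $t$ of the algorithm, $\Phi_{t+1}\le\Phi_t$.
   Context: Powers of vectors are entrywise, $\circ$ is the entrywise product. Algorithm PNormPacking$(\mathbf{A},\epsilon,p)$: set $\eta = 1/p$, $T = \frac{4p\log(nd/\epsilon)}{\epsilon}$, $w_0 = \frac{\epsilon}{n^2 d}\mathbf{1}$, $z=\mathbf{0}$, $t=0$. While $\|w_t\|_1\le\epsilon^{-1}$: let $v_t = \mathbf{A}w_t/\|\mathbf{A}w_t\|_p$, $g_t = \max(0,\mathbf{1}-\mathbf{A}^\top(v_t)^{p-1})$ entrywise, $w_{t+1} = w_t\circ(1+\eta g_t)$, $z\leftarrow z+(v_t)^{p-1}$, $t\leftarrow t+1$; if $t\ge T$, return $z/\|z\|_q$ with $q = p/(p-1)$. If the loop exits, return $w_t/\|w_t\|_1$. *)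

theory Defs
  imports Complex_Main
begin

text \<open>Matrices A in R^{d x n} are functions 'd => 'n => real over finite index types;
  vectors in R^n are functions 'n => real. Powers of vectors are entrywise (powr).\<close>

definition pnorm :: "real \<Rightarrow> ('a::finite \<Rightarrow> real) \<Rightarrow> real" where
  "pnorm p x = (\<Sum>i\<in>UNIV. \<bar>x i\<bar> powr p) powr (1 / p)"

definition l1norm :: "('a::finite \<Rightarrow> real) \<Rightarrow> real" where
  "l1norm x = (\<Sum>i\<in>UNIV. \<bar>x i\<bar>)"

definition matvec :: "('d::finite \<Rightarrow> 'n::finite \<Rightarrow> real) \<Rightarrow> ('n \<Rightarrow> real) \<Rightarrow> 'd \<Rightarrow> real" where
  "matvec A w = (\<lambda>i. \<Sum>j\<in>UNIV. A i j * w j)"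

definition matTvec :: "('d::finite \<Rightarrow> 'n::finite \<Rightarrow> real) \<Rightarrow> ('d \<Rightarrow> real) \<Rightarrow> 'n \<Rightarrow> real" where
  "matTvec A v = (\<lambda>j. \<Sum>i\<in>UNIV. A i j * v i)"

definition pnp_v :: "('d::finite \<Rightarrow> 'n::finite \<Rightarrow> real) \<Rightarrow> real \<Rightarrow> ('n \<Rightarrow> real) \<Rightarrow> 'd \<Rightarrow> real" where
  "pnp_v A p w = (\<lambda>i. matvec A w i / pnorm p (matvec A w))"

definition pnp_g :: "('d::finite \<Rightarrow> 'n::finite \<Rightarrow> real) \<Rightarrow> real \<Rightarrow> ('n \<Rightarrow> real) \<Rightarrow> 'n \<Rightarrow> real" where
  "pnp_g A p w = (\<lambda>j. max 0 (1 - matTvec A (\<lambda>i. pnp_v A p w i powr (p - 1)) j))"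

definition pnp_step :: "('d::finite \<Rightarrow> 'n::finite \<Rightarrow> real) \<Rightarrow> real \<Rightarrow> ('n \<Rightarrow> real) \<Rightarrow> 'n \<Rightarrow> real" where
  "pnp_step A p w = (\<lambda>j. w j * (1 + (1 / p) * pnp_g A p w j))"

definition pnp_w :: "('d::finite \<Rightarrow> 'n::finite \<Rightarrow> real) \<Rightarrow> real \<Rightarrow> real \<Rightarrow> nat \<Rightarrow> 'n \<Rightarrow> real" where
  "pnp_w A eps p t = (pnp_step A p ^^ t) (\<lambda>_. eps / (real (card (UNIV :: 'n set)) ^ 2 * real (card (UNIV :: 'd set))))"

definition pnp_T :: "('d::finite \<Rightarrow> 'n::finite \<Rightarrow> real) \<Rightarrow> real \<Rightarrow> real \<Rightarrow> real" where
  "pnp_T A eps p = 4 * p * ln (real (card (UNIV :: 'n set)) * real (card (UNIV :: 'd set)) / eps) / eps"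

definition pnp_Phi :: "('d::finite \<Rightarrow> 'n::finite \<Rightarrow> real) \<Rightarrow> real \<Rightarrow> real \<Rightarrow> nat \<Rightarrow> real" where
  "pnp_Phi A eps p t = pnorm p (matvec A (pnp_w A eps p t)) - l1norm (pnp_w A eps p t)"

text \<open>Iteration t of the algorithm is executed: the while-test passed at every step s <= t
  and the algorithm has not returned because of the counter, i.e. t < T.\<close>
definition pnp_runs :: "('d::finite \<Rightarrow> 'n::finite \<Rightarrow> real) \<Rightarrow> real \<Rightarrow> real \<Rightarrow> nat \<Rightarrow> bool" where
  "pnp_runs A eps p t \<longleftrightarrow> (\<forall>s\<le>t. l1norm (pnp_w A eps p s) \<le> 1 / eps) \<and> real t < pnp_T A eps p"

end

theory Submission
  imports Defs "HOL-Analysis.Convex"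
begin

lemma bern_powr:
  fixes x p :: real assumes "0 \<le> x" "1 \<le> p"
  shows "1 + p * x \<le> (1 + x) powr p"
proof -
  let ?f = "\<lambda>t::real. (1 + t) powr p - 1 - p * t"
  have "?f 0 \<le> ?f x"
  proof (rule DERIV_nonneg_imp_nondecreasing[OF assms(1)])
    fix t :: real assume t: "0 \<le> t" "t \<le> x"
    have d: "(?f has_real_derivative p * (1 + t) powr (p - 1) * 1 - 0 - p * 1) (at t)"
      using t by (auto intro!: derivative_eq_intros)
    have "1 \<le> (1 + t) powr (p - 1)"
      using t assms by (simp add: ge_one_powr_ge_zero)
    then have "0 \<le> p * (1 + t) powr (p - 1) * 1 - 0 - p * 1"
      using assms by (simp add: algebra_simps)
    then show "\<exists>y. (?f has_real_derivative y) (at t) \<and> 0 \<le> y" using d by blast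
  qed
  then show ?thesis by simp
qed

lemma exp_step:
  fixes g p :: real assumes "0 \<le> g" "g \<le> 1" "1 \<le> p"
  shows "(1 + g / p) powr p \<le> 1 + g + g^2"
proof -
  have "(1 + g / p) powr p \<le> exp (g / p) powr p"
    using assms by (intro powr_mono2) (auto simp: exp_ge_add_one_self)
  also have "\<dots> = exp g" using assms by (simp add: powr_def)
  also have "\<dots> \<le> 1 + g + g^2" by (rule exp_bound) (use assms in auto)
  finally show ?thesis .
qed

lemma cs_weighted:
  fixes c g :: "'a \<Rightarrow> real" assumes "\<And>j. c j \<ge> 0"
  shows "(\<Sum>j\<in>I. c j * g j)^2 \<le> (\<Sum>j\<in>I. c j) * (\<Sum>j\<in>I. c j * (g j)^2)"
proof -
  have "(\<Sum>j\<in>I. sqrt (c j) * (sqrt (c j) * g j))^2 \<le> (\<Sum>j\<in>I. (sqrt (c j))^2) * (\<Sum>j\<in>I. (sqrt (c j) * g j)^2)"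
    by (rule Cauchy_Schwarz_ineq_sum)
  moreover have "sqrt (c j) * (sqrt (c j) * g j) = c j * g j" for j
  proof -
    have "sqrt (c j) * sqrt (c j) = c j" using assms[of j] by simp
    then show ?thesis by (simp add: mult.assoc[symmetric])
  qed
  moreover have "\<And>j. (sqrt (c j) * g j)^2 = c j * (g j)^2"
    using assms by (simp add: power_mult_distrib)
  ultimately show ?thesis using assms by simp
qed

lemma row_bound:
  fixes y z q p :: real
  assumes "0 \<le> z" "z \<le> y" "z^2 \<le> y * q" "1 \<le> p"
  shows "(y + z / p) powr p \<le> y powr p + y powr (p - 1) * (z + q)"
proof (cases "y = 0")
  case True
  then show ?thesis using assms by simp
next
  case False
  then have y: "y > 0" using assms by simp
  define \<gamma> where "\<gamma> = z / y"
  have g0: "0 \<le> \<gamma>" "\<gamma> \<le> 1" using assms y by (auto simp: \<gamma>_def)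
  have "y + z / p = y * (1 + \<gamma> / p)" using y by (simp add: \<gamma>_def field_simps)
  then have "(y + z / p) powr p = y powr p * (1 + \<gamma> / p) powr p"
    using y g0 assms by (simp add: powr_mult)
  also have "\<dots> \<le> y powr p * (1 + \<gamma> + \<gamma>^2)"
    by (rule mult_left_mono[OF exp_step]) (use g0 assms in auto)
  also have "y powr p = y powr (p - 1) * y" using y by (simp add: powr_diff)
  also have "y powr (p - 1) * y * (1 + \<gamma> + \<gamma>^2) = y powr (p - 1) * (y + z + z^2 / y)"
    using y by (simp add: \<gamma>_def field_simps power2_eq_square)
  also have "\<dots> \<le> y powr (p - 1) * (y + z + q)"
    using y assms by (intro mult_left_mono) (auto simp: field_simps)
  also have "\<dots> = y powr p + y powr (p - 1) * (z + q)"
    using y by (simp add: powr_diff field_simps)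
  finally show ?thesis .
qed

lemma hg_bound:
  fixes h :: real assumes "0 \<le> h"
  shows "(max 0 (1 - h) + (max 0 (1 - h))^2) * h \<le> max 0 (1 - h)"
proof (cases "h \<le> 1")
  case True
  have e: "max 0 (1 - h) = 1 - h" using True by simp
  have "(1 - h) - (1 - h + (1 - h)^2) * h = (1 - h)^3"
    by (simp add: power2_eq_square power3_eq_cube algebra_simps)
  moreover have "(1 - h)^3 \<ge> 0" using True by simp
  ultimately show ?thesis unfolding e by linarith
next
  case False then show ?thesis by simp
qed

lemma pnp_w_nonneg:
  assumes "\<And>i j. A i j \<ge> 0" "0 < eps" "0 < p"
  shows "pnp_w A eps p t j \<ge> 0"
proof (induction t arbitrary: j)
  case 0 then show ?case using assms by (simp add: pnp_w_def)
next
  case (Suc t)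
  have "pnp_g A p (pnp_w A eps p t) j \<ge> 0" by (simp add: pnp_g_def)
  then have "1 + (1 / p) * pnp_g A p (pnp_w A eps p t) j \<ge> 0" using assms by simp
  then show ?case using Suc by (simp add: pnp_w_def pnp_step_def)
qed

theorem lemma3:
  fixes A :: "'d::finite \<Rightarrow> 'n::finite \<Rightarrow> real" and eps p :: real and t :: nat
  assumes "\<And>i j. A i j \<ge> 0"
    and "0 < eps" and "eps \<le> 1/2"
    and "p \<ge> 2"
    and "pnp_runs A eps p t"
  shows "pnp_Phi A eps p (Suc t) \<le> pnp_Phi A eps p t"
proof -
  have p1: "1 \<le> p" and p0: "0 < p" using assms(4) by auto
  define w where "w = pnp_w A eps p t"
  have w0: "\<And>j. w j \<ge> 0" unfolding w_def by (rule pnp_w_nonneg) (use assms p0 in auto)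
  define g where "g = pnp_g A p w"
  define h where "h = matTvec A (\<lambda>i. pnp_v A p w i powr (p - 1))"
  have gh: "\<And>j. g j = max 0 (1 - h j)" unfolding g_def h_def pnp_g_def by simp
  have h0: "\<And>j. h j \<ge> 0" unfolding h_def matTvec_def using assms(1) by (auto intro!: sum_nonneg)
  have g0: "\<And>j. g j \<ge> 0" and g1: "\<And>j. g j \<le> 1" using gh h0 by auto
  have wS: "pnp_w A eps p (Suc t) = (\<lambda>j. w j * (1 + (1 / p) * g j))"
    unfolding w_def g_def by (simp add: pnp_w_def pnp_step_def)
  define y where "y = matvec A w"
  define N where "N = pnorm p y"
  define z where "z = (\<lambda>i. \<Sum>j\<in>UNIV. A i j * w j * g j)"
  define q where "q = (\<lambda>i. \<Sum>j\<in>UNIV. A i j * w j * (g j)^2)"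
  define S where "S = (\<Sum>j\<in>UNIV. w j * g j)"
  have y0: "\<And>i. y i \<ge> 0" unfolding y_def matvec_def using assms(1) w0 by (auto intro!: sum_nonneg)
  have z0: "\<And>i. z i \<ge> 0" unfolding z_def using assms(1) w0 g0 by (auto intro!: sum_nonneg)
  have zy: "\<And>i. z i \<le> y i" unfolding z_def y_def matvec_def
    using assms(1) w0 g0 g1 by (intro sum_mono) (simp add: mult_left_le)
  have zq: "\<And>i. (z i)^2 \<le> y i * q i"
  proof -
    fix i
    have "(\<Sum>j\<in>UNIV. (A i j * w j) * g j)^2 \<le> (\<Sum>j\<in>UNIV. A i j * w j) * (\<Sum>j\<in>UNIV. (A i j * w j) * (g j)^2)"
      by (rule cs_weighted) (simp add: assms(1) w0)
    then show "(z i)^2 \<le> y i * q i" by (simp add: z_def q_def y_def matvec_def)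
  qed
  have S0: "S \<ge> 0" unfolding S_def using w0 g0 by (auto intro!: sum_nonneg)
  have yS: "matvec A (pnp_w A eps p (Suc t)) = (\<lambda>i. y i + z i / p)"
    unfolding wS y_def z_def matvec_def
    by (auto simp: sum.distrib sum_divide_distrib algebra_simps)
  have lS: "l1norm (pnp_w A eps p (Suc t)) = l1norm w + S / p"
  proof -
    have "\<And>j. 0 \<le> w j * (1 + (1 / p) * g j)" using w0 g0 p0 by simp
    then have "l1norm (pnp_w A eps p (Suc t)) = (\<Sum>j\<in>UNIV. w j + w j * g j / p)"
      unfolding wS l1norm_def by (simp add: algebra_simps)
    also have "\<dots> = l1norm w + S / p"
      unfolding l1norm_def S_def using w0 by (simp add: sum.distrib sum_divide_distrib)
    finally show ?thesis .
  qed
  have key: "pnorm p (\<lambda>i. y i + z i / p) \<le> N + S / p"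
  proof (cases "N = 0")
    case True
    have "(\<Sum>i\<in>UNIV. \<bar>y i\<bar> powr p) = 0"
      using True unfolding N_def pnorm_def by simp
    then have "\<forall>i\<in>UNIV. \<bar>y i\<bar> powr p = 0" by (subst sum_nonneg_eq_0_iff[symmetric]) auto
    then have "\<And>i. y i = 0" by simp
    then have "\<And>i. z i = 0" using z0 zy by (metis order_antisym)
    then have "pnorm p (\<lambda>i. y i + z i / p) = 0" using \<open>\<And>i. y i = 0\<close> p0 by (simp add: pnorm_def)
    then show ?thesis using True S0 p0 by simp
  next
    case False
    have N0: "N > 0" using False unfolding N_def pnorm_def by simp
    have Np: "(\<Sum>i\<in>UNIV. y i powr p) = N powr p"
      unfolding N_def pnorm_def using y0 p0 by (simp add: powr_powr sum_nonneg)
    have hN: "\<And>j. h j = (\<Sum>i\<in>UNIV. A i j * y i powr (p - 1)) / N powr (p - 1)"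
      unfolding h_def matTvec_def pnp_v_def
      using y0 N0 by (simp add: y_def[symmetric] N_def[symmetric] powr_divide sum_divide_distrib)
    have "(\<Sum>i\<in>UNIV. y i powr (p - 1) * (z i + q i))
        = (\<Sum>i\<in>UNIV. \<Sum>j\<in>UNIV. y i powr (p - 1) * (A i j * w j * (g j + (g j)^2)))"
      unfolding z_def q_def by (simp add: sum_distrib_left sum.distrib[symmetric] algebra_simps)
    also have "\<dots> = (\<Sum>j\<in>UNIV. w j * (g j + (g j)^2) * (\<Sum>i\<in>UNIV. A i j * y i powr (p - 1)))"
      by (subst sum.swap) (simp add: sum_distrib_left sum.distrib algebra_simps)
    also have "\<dots> = N powr (p - 1) * (\<Sum>j\<in>UNIV. w j * ((g j + (g j)^2) * h j))"
    proof -
      have "w j * (g j + (g j)^2) * (\<Sum>i\<in>UNIV. A i j * y i powr (p - 1))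
          = N powr (p - 1) * (w j * ((g j + (g j)^2) * h j))" for j
        using N0 unfolding hN by (simp add: field_simps)
      then show ?thesis by (simp add: sum_distrib_left)
    qed
    also have "\<dots> \<le> N powr (p - 1) * S"
      unfolding S_def using w0 gh h0 hg_bound
      by (intro mult_left_mono sum_mono) (auto intro: mult_left_mono)
    finally have cross: "(\<Sum>i\<in>UNIV. y i powr (p - 1) * (z i + q i)) \<le> N powr (p - 1) * S" .
    have "(\<Sum>i\<in>UNIV. \<bar>y i + z i / p\<bar> powr p) = (\<Sum>i\<in>UNIV. (y i + z i / p) powr p)"
      using y0 z0 p0 by (simp add: abs_of_nonneg)
    also have "\<dots> \<le> (\<Sum>i\<in>UNIV. y i powr p + y i powr (p - 1) * (z i + q i))"
      by (intro sum_mono row_bound) (auto simp: z0 zy zq p1)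
    also have "\<dots> \<le> N powr p + N powr (p - 1) * S"
      using cross Np by (simp add: sum.distrib)
    also have "\<dots> = N powr p * (1 + p * (S / (p * N)))"
      using N0 p0 by (simp add: powr_diff field_simps)
    also have "\<dots> \<le> N powr p * (1 + S / (p * N)) powr p"
      using N0 p0 p1 S0 by (intro mult_left_mono bern_powr) auto
    also have "\<dots> = (N + S / p) powr p"
    proof -
      have "N * (1 + S / (p * N)) = N + S / p" using N0 p0 by (simp add: field_simps)
      then show ?thesis using N0 p0 S0 by (metis powr_mult less_imp_le zero_le_divide_iff mult_pos_pos add_nonneg_nonneg zero_le_one)
    qed
    finally have le: "(\<Sum>i\<in>UNIV. \<bar>y i + z i / p\<bar> powr p) \<le> (N + S / p) powr p" .
    have "pnorm p (\<lambda>i. y i + z i / p) \<le> ((N + S / p) powr p) powr (1 / p)"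
      unfolding pnorm_def using p0 by (intro powr_mono2 le) (auto intro: sum_nonneg)
    also have "\<dots> = N + S / p" using N0 p0 S0 by (simp add: powr_powr)
    finally show ?thesis .
  qed
  show ?thesis
    unfolding pnp_Phi_def yS lS using key by (simp add: w_def y_def N_def)
qed

end
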